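(* Let $k$ be a field, $Q,q\in k^\times$, $n,d\ge1$. Every eigenvalue of $c_K=\prod_{i=1}^dK_i$, where $K_i=T_{i-1}\cdots T_1T_0T_1\cdots T_{i-1}$, acting on $V_n^{\otimes d}$ is of the form $\pm Q^{a}q^{b}$ for some $a,b\in\mathbb Z$.
   Context: $\mathcal H^B_{Q,q}(d)$ is the $k$-algebra generated by $T_0,\dots,T_{d-1}$ with relations $(T_0+Q)(T_0-Q^{-1})=0$; $(T_i+q)(T_i-q^{-1})=0$ ($i>0$); $T_iT_{i+1}T_i=T_{i+1}T_iT_{i+1}$ ($i>0$); $T_0T_1T_0T_1=T_1T_0T_1T_0$; $T_iT_j=T_jT_i$ ($|i-j|>1$); the $K_i$ pairwise commute. For $n=2r$ let $\mathbb I_n=\{-\tfrac{2r-1}{2},\dots,-\tfrac12,\tfrac12,\dots,\tfrac{2r-1}{2}\}$ and for $n=2r+1$ let $\mathbb I_n=\{-r,\dots,r\}$; $V_n$ has basis $\{v_i:i\in\mathbb I_n\}$. $R_q(v_i\otimes v_j)=q^{-1}v_i\otimes v_j$ if $i=j$, $v_j\otimes v_i$ if $i<j$, $v_j\otimes v_i+(q^{-1}-q)v_i\otimes v_j$ if $i>j$; $K_Q(v_i)=Q^{-1}v_i$ if $i=0$, $v_{-i}$ if $i>0$, $v_{-i}+(Q^{-1}-Q)v_i$ if $i<0$. The algebra acts on $V_n^{\otimes d}$ from the right: $T_i$ ($i>0$) by $R_q$ on factors $i,i+1$, $T_0$ by $K_Q$ on the first factor. *)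

theory Defs
  imports Main
begin

text \<open>Index set I_n encoded by doubling: the index i in I_n is represented by the
integer 2i. For n = 2r this gives the odd integers -(2r-1),...,2r-1; for n = 2r+1 the even
integers -2r,...,2r. The encoding preserves order, sign and the index 0.\<close>
definition idx_set :: "nat \<Rightarrow> int set" where
  "idx_set n = {j. \<bar>j\<bar> \<le> int n - 1 \<and> (j - (int n - 1)) mod 2 = 0}"

text \<open>Basis of V_n^{\<otimes>d}: words v_{w_1} \<otimes> ... \<otimes> v_{w_d}.\<close>
definition words :: "nat \<Rightarrow> nat \<Rightarrow> int list set" where
  "words n d = {w. length w = d \<and> set w \<subseteq> idx_set n}"

text \<open>Vectors of V_n^{\<otimes>d}: coefficient functions supported on the basis words.\<close>
definition tensor_space :: "nat \<Rightarrow> nat \<Rightarrow> (int list \<Rightarrow> 'k::field) set" where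
  "tensor_space n d = {v. \<forall>w. w \<notin> words n d \<longrightarrow> v w = 0}"

definition delta :: "int list \<Rightarrow> int list \<Rightarrow> 'k::field" where
  "delta w u = (if u = w then 1 else 0)"

definition swap_at :: "nat \<Rightarrow> int list \<Rightarrow> int list" where
  "swap_at i w = w[i - 1 := w ! i, i := w ! (i - 1)]"

text \<open>Image of the basis word w under the generator T_j (right action):
T_0 acts by K_Q on the first factor, T_i (i>0) by R_q on factors i, i+1.\<close>
definition gen_basis :: "'k::field \<Rightarrow> 'k \<Rightarrow> nat \<Rightarrow> int list \<Rightarrow> int list \<Rightarrow> 'k" where
  "gen_basis Q q j w =
     (if j = 0 then
        (let a = w ! 0 in
         if a = 0 then (\<lambda>u. inverse Q * delta w u)
         else if a > 0 then delta (w[0 := - a])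
         else (\<lambda>u. delta (w[0 := - a]) u + (inverse Q - Q) * delta w u))
      else
        (let a = w ! (j - 1); b = w ! j in
         if a = b then (\<lambda>u. inverse q * delta w u)
         else if a < b then delta (swap_at j w)
         else (\<lambda>u. delta (swap_at j w) u + (inverse q - q) * delta w u)))"

definition gen_act :: "nat \<Rightarrow> nat \<Rightarrow> 'k::field \<Rightarrow> 'k \<Rightarrow> nat \<Rightarrow> (int list \<Rightarrow> 'k) \<Rightarrow> (int list \<Rightarrow> 'k)" where
  "gen_act n d Q q j v = (\<lambda>u. \<Sum>w\<in>words n d. v w * gen_basis Q q j w u)"

definition word_act :: "nat \<Rightarrow> nat \<Rightarrow> 'k::field \<Rightarrow> 'k \<Rightarrow> nat list \<Rightarrow> (int list \<Rightarrow> 'k) \<Rightarrow> (int list \<Rightarrow> 'k)" where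
  "word_act n d Q q js v = fold (gen_act n d Q q) js v"

definition K_word :: "nat \<Rightarrow> nat list" where
  "K_word i = rev [1..<i] @ 0 # [1..<i]"

definition cK_word :: "nat \<Rightarrow> nat list" where
  "cK_word d = concat (map K_word [1..<d+1])"

definition cK_act :: "nat \<Rightarrow> nat \<Rightarrow> 'k::field \<Rightarrow> 'k \<Rightarrow> (int list \<Rightarrow> 'k) \<Rightarrow> (int list \<Rightarrow> 'k)" where
  "cK_act n d Q q v = word_act n d Q q (cK_word d) v"

end

theory Submission
  imports Defs "HOL-Library.Function_Algebras"
begin


definition smul :: "'k::field \<Rightarrow> (int list \<Rightarrow> 'k) \<Rightarrow> (int list \<Rightarrow> 'k)" where
  "smul c u = (\<lambda>w. c * u w)"

definition islin :: "((int list \<Rightarrow> 'k::field) \<Rightarrow> (int list \<Rightarrow> 'k)) \<Rightarrow> bool" where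
  "islin f \<longleftrightarrow> (\<forall>u v. f (u + v) = f u + f v) \<and> (\<forall>c u. f (smul c u) = smul c (f u))"

typedef (overloaded) 'k lop = "{f :: (int list \<Rightarrow> 'k::field) \<Rightarrow> (int list \<Rightarrow> 'k). islin f}"
  by (rule exI[of _ id]) (simp add: islin_def)

setup_lifting type_definition_lop

lemma islin_add: "islin f \<Longrightarrow> f (u + v) = f u + f v" by (simp add: islin_def)
lemma islin_smul: "islin f \<Longrightarrow> f (smul c u) = smul c (f u)" by (simp add: islin_def)
lemma islin_zero: "islin f \<Longrightarrow> f 0 = 0"
proof -
  assume "islin f"
  have "f (smul 0 0) = smul 0 (f 0)" using islin_smul[OF \<open>islin f\<close>] .
  moreover have "smul 0 (0::int list \<Rightarrow> 'a) = 0" by (simp add: smul_def zero_fun_def)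
  ultimately show ?thesis by (simp add: smul_def zero_fun_def)
qed
lemma islin_neg: "islin f \<Longrightarrow> f (- u) = - f u"
proof -
  assume a: "islin f"
  have "f (- u) + f u = 0" using islin_add[OF a, of "-u" u, symmetric] islin_zero[OF a] by simp
  then show ?thesis by (simp add: eq_neg_iff_add_eq_0)
qed
lemma islin_diff: "islin f \<Longrightarrow> f (u - v) = f u - f v"
  using islin_add[of f u "-v"] islin_neg[of f v] by simp

instantiation lop :: (field) ring_1
begin
lift_definition zero_lop :: "'a lop" is "\<lambda>u. 0" by (simp add: islin_def smul_def zero_fun_def)
lift_definition one_lop :: "'a lop" is "\<lambda>u. u" by (simp add: islin_def)
lift_definition plus_lop :: "'a lop \<Rightarrow> 'a lop \<Rightarrow> 'a lop" is "\<lambda>f g u. f u + g u"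
  by (simp add: islin_def smul_def plus_fun_def algebra_simps)
lift_definition uminus_lop :: "'a lop \<Rightarrow> 'a lop" is "\<lambda>f u. - f u"
  by (auto simp add: islin_def smul_def fun_eq_iff)
lift_definition minus_lop :: "'a lop \<Rightarrow> 'a lop \<Rightarrow> 'a lop" is "\<lambda>f g u. f u - g u"
  by (auto simp add: islin_def smul_def fun_eq_iff algebra_simps)
lift_definition times_lop :: "'a lop \<Rightarrow> 'a lop \<Rightarrow> 'a lop" is "\<lambda>f g u. g (f u)"
  by (simp add: islin_def)
instance
proof
  fix a b c :: "'a lop"
  show "a * b * c = a * (b * c)" by transfer simp
  show "1 * a = a" by transfer simp
  show "a * 1 = a" by transfer simp
  show "a + b + c = a + (b + c)" by transfer (simp add: add.assoc)
  show "a + b = b + a" by transfer (simp add: add.commute)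
  show "0 + a = a" by transfer simp
  show "- a + a = 0" by transfer simp
  show "a - b = a + - b" by transfer simp
  show "(a + b) * c = a * c + b * c" by transfer (simp add: fun_eq_iff islin_add)
  show "a * (b + c) = a * b + a * c" by transfer simp
  show "(0::'a lop) \<noteq> 1"
  proof transfer
    show "(\<lambda>u::int list \<Rightarrow> 'a. 0) \<noteq> (\<lambda>u. u)"
    proof
      assume "(\<lambda>u::int list \<Rightarrow> 'a. 0) = (\<lambda>u. u)"
      then have "(0::int list \<Rightarrow> 'a) = 1" by metis
      then have "(0::int list \<Rightarrow> 'a) [] = 1 []" by simp
      then show False by simp
    qed
  qed
qed
end

lift_definition sc :: "'k::field \<Rightarrow> 'k lop" is "\<lambda>c u. smul c u"
  by (simp add: islin_def smul_def plus_fun_def algebra_simps)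

lemma sc_comm: "sc c * X = X * sc c"
  by transfer (simp add: islin_smul)
lemma sc_mult: "sc a * sc b = sc (a * b)"
  by transfer (simp add: smul_def fun_eq_iff mult.commute mult.left_commute)
lemma sc_add: "sc a + sc b = sc (a + b)"
  by transfer (simp add: smul_def fun_eq_iff algebra_simps)
lemma sc_one: "sc 1 = 1" by transfer (simp add: smul_def)
lemma sc_zero: "sc 0 = 0" by transfer (simp add: smul_def zero_fun_def)
lemma sc_uminus: "- sc a = sc (- a)"
  by transfer (simp add: smul_def fun_eq_iff)
lemma sc_diff: "sc a - sc b = sc (a - b)"
  by transfer (simp add: smul_def fun_eq_iff algebra_simps)

lemma lop_eqI: "(\<And>u. Rep_lop X u = Rep_lop Y u) \<Longrightarrow> X = Y"
  by (metis Rep_lop_inject ext)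
lemma Rep_times: "Rep_lop (X * Y) u = Rep_lop Y (Rep_lop X u)" by transfer simp
lemma Rep_plus: "Rep_lop (X + Y) u = Rep_lop X u + Rep_lop Y u" by transfer simp
lemma Rep_minus: "Rep_lop (X - Y) u = Rep_lop X u - Rep_lop Y u" by transfer simp
lemma Rep_one: "Rep_lop 1 u = u" by transfer simp
lemma Rep_sc: "Rep_lop (sc c) u = smul c u" by transfer simp
lemma Rep_islin: "islin (Rep_lop X)" using Rep_lop by simp




inductive_set pAB :: "'k::field lop \<Rightarrow> 'k lop \<Rightarrow> 'k lop set" for A B where
  pA: "A \<in> pAB A B" | pB: "B \<in> pAB A B" | psc: "sc c \<in> pAB A B"
| padd: "X \<in> pAB A B \<Longrightarrow> Y \<in> pAB A B \<Longrightarrow> X + Y \<in> pAB A B"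
| pmul: "X \<in> pAB A B \<Longrightarrow> Y \<in> pAB A B \<Longrightarrow> X * Y \<in> pAB A B"
| pdiff: "X \<in> pAB A B \<Longrightarrow> Y \<in> pAB A B \<Longrightarrow> X - Y \<in> pAB A B"

lemma pAB_one: "1 \<in> pAB A B" using psc[of 1] by (simp add: sc_one)
lemma pAB_zero: "0 \<in> pAB A B" using psc[of 0] by (simp add: sc_zero)
lemma pAB_uminus: "X \<in> pAB A B \<Longrightarrow> - X \<in> pAB A B" using pdiff[OF pAB_zero] by fastforce

lemma pAB_comm_gen:
  assumes "A * Y = Y * A" "B * Y = Y * B"
  shows "X \<in> pAB A B \<Longrightarrow> X * Y = Y * X"
proof -
  assume "X \<in> pAB A B"
  then show ?thesis
  proof (induction rule: pAB.induct)
    case pA then show ?case using assms by blast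
  next
    case pB then show ?case using assms by blast
  next
    case (psc c) then show ?case by (simp add: sc_comm)
  next
    case (padd X Y') then show ?case by (simp add: algebra_simps)
  next
    case (pmul X Y') then show ?case by (metis mult.assoc)
  next
    case (pdiff X Y') then show ?case by (simp add: algebra_simps)
  qed
qed

lemma pAB_comm:
  assumes AB: "A * B = B * A" and X: "X \<in> pAB A B" and Y: "Y \<in> pAB A B"
  shows "X * Y = Y * X"
proof -
  have hA: "A * Z = Z * A" if "Z \<in> pAB A B" for Z
    using pAB_comm_gen[where A=A and B=B and Y=A and X=Z] that AB by simp
  have hB: "B * Z = Z * B" if "Z \<in> pAB A B" for Z
    using pAB_comm_gen[where A=A and B=B and Y=B and X=Z] that AB by simp
  show ?thesis
    using pAB_comm_gen[where A=A and B=B and Y=Y and X=X] X hA[OF Y] hB[OF Y] by simp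
qed

definition P :: "'k::field lop \<Rightarrow> 'k list \<Rightarrow> 'k lop" where
  "P X ps = prod_list (map (\<lambda>a. X - sc a) ps)"

lemma P_Nil[simp]: "P X [] = 1" by (simp add: P_def)
lemma P_Cons[simp]: "P X (a # ps) = (X - sc a) * P X ps" by (simp add: P_def)
lemma P_append: "P X (ps @ qs) = P X ps * P X qs" by (simp add: P_def)

lemma P_pA: "P A ps \<in> pAB A B"
  by (induction ps) (auto intro: pAB.intros pAB_one)
lemma P_pB: "P B ps \<in> pAB A B"
  by (induction ps) (auto intro: pAB.intros pAB_one)

lemma sc_move: "X * sc c = sc c * X" by (simp add: sc_comm)
lemma sc_move2: "X * (sc c * Y) = sc c * (X * Y)" by (metis mult.assoc sc_comm)

lemma sc_mult2: "sc a * (sc b * Y) = sc (a*b) * Y" by (metis mult.assoc sc_mult)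

lemma TA_rel:
  assumes TAT: "T*A*T = B" and TT: "T*T = sc x*T + 1"
  shows "T*A = B*T - sc x * B"
proof -
  have 1: "T*T - sc x*T = 1" using TT by simp
  have "T*A = T*A*(T*T - sc x*T)" by (simp add: 1)
  also have "... = (T*A*T)*T - sc x*(T*A*T)"
    by (simp add: right_diff_distrib mult.assoc sc_move[of T] sc_move2[of T] sc_move2[of A])
  finally show ?thesis using TAT by simp
qed

lemma TB_rel:
  assumes TAT: "T*A*T = B" and TT: "T*T = sc x*T + 1"
  shows "T*B = sc x * B + A*T"
proof -
  have "T*B = (T*T)*A*T" using TAT by (simp add: mult.assoc)
  also have "... = sc x * (T*A*T) + A*T" by (simp add: TT algebra_simps sc_move2[of T])
  finally show ?thesis using TAT by simp
qed

lemma bern: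
  assumes AB: "A*B = B*A" and TA: "T*A = B*T - sc x * B"
  shows "\<exists>C\<in>pAB A B. T * P A ps = P B ps * T + C \<and> C*(A - B) = - (sc x * B * (P A ps - P B ps))"
proof (induction ps)
  case Nil
  show ?case by (rule bexI[of _ 0]) (auto intro: pAB_zero)
next
  case (Cons a ps)
  then obtain C where C: "C \<in> pAB A B" and e1: "T * P A ps = P B ps * T + C"
     and e2: "C*(A - B) = - (sc x * B * (P A ps - P B ps))" by blast
  define PA where "PA = P A ps"
  define PB where "PB = P B ps"
  have PA: "PA \<in> pAB A B" unfolding PA_def by (rule P_pA)
  have PB: "PB \<in> pAB A B" unfolding PB_def by (rule P_pB)
  define C' where "C' = (B - sc a)*C - sc x*B*PA"
  have C': "C' \<in> pAB A B" unfolding C'_def by (intro pAB.intros C PA)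
  have "T * P A (a # ps) = (T*A - sc a * T) * PA"
    by (simp add: PA_def algebra_simps sc_move2[of T])
  also have "... = (B - sc a)*(T*PA) - sc x*B*PA" by (simp add: TA algebra_simps sc_move2[of B])
  also have "... = P B (a#ps) * T + C'" by (simp add: e1[folded PA_def PB_def] C'_def PB_def algebra_simps)
  finally have f1: "T * P A (a # ps) = P B (a#ps) * T + C'" .
  have cBx: "B * sc x = sc x * B" by (simp add: sc_comm)
  have c1: "PA * B = B * PA" using pAB_comm[OF AB PA pB] .
  have c2: "PA * A = A * PA" using pAB_comm[OF AB PA pA] .
  have "C'*(A-B) = (B - sc a)*(C*(A-B)) - sc x*B*PA*(A-B)" by (simp add: C'_def algebra_simps)
  also have "... = - ((B - sc a)*(sc x * B) * (PA - PB)) - sc x*B*(PA*(A-B))"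
    by (simp add: e2[folded PA_def PB_def] mult.assoc)
  also have "... = - (sc x * B * ((B - sc a) * (PA - PB))) - sc x*B*(PA*(A-B))"
    by (simp add: algebra_simps sc_move[of B] sc_move2[of B] sc_mult2 sc_mult)
  also have "... = - (sc x * B * ((B - sc a) * (PA - PB) + PA*(A-B)))"
    by (simp add: algebra_simps)
  also have "(B - sc a) * (PA - PB) + PA*(A-B) = (A - sc a)*PA - (B - sc a)*PB"
    by (simp add: algebra_simps c1 c2 sc_move[of PA])
  finally have f2: "C'*(A-B) = - (sc x * B * (P A (a#ps) - P B (a#ps)))" by (simp add: PA_def PB_def)
  show ?case using f1 f2 C' by blast
qed


lemma aux_gr: "(X::'a::ab_group_add) - y - y = - y \<Longrightarrow> X = y"
  by (simp add: algebra_simps)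

lemma PB_R:
  assumes AB: "A*B = B*A" and TAT: "T*A*T = B" and TT: "T*T = sc x*T + 1"
    and PA0: "P A ps = 0"
  shows "P B ps * ((A - B)*(A - B) - sc (x*x) * (A*B)) = 0"
proof -
  have TA: "T*A = B*T - sc x * B" by (rule TA_rel[OF TAT TT])
  have TB: "T*B = sc x * B + A*T" by (rule TB_rel[OF TAT TT])
  obtain C where C: "C \<in> pAB A B" and e1: "T * P A ps = P B ps * T + C"
     and e2: "C*(A - B) = - (sc x * B * (P A ps - P B ps))"
    using bern[OF AB TA] by blast
  define PB where "PB = P B ps"
  have PBp: "PB \<in> pAB A B" unfolding PB_def by (rule P_pB)
  have c1: "PB * B = B * PB" using pAB_comm[OF AB PBp pB] .
  have c2: "PB * A = A * PB" using pAB_comm[OF AB PBp pA] .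
  have h1: "PB*T = - C" using e1 PA0 by (simp add: PB_def eq_neg_iff_add_eq_0)
  have h2: "C*(A - B) = sc x * B * PB" using e2 PA0 by (simp add: PB_def)
  have h3: "T*(A-B) = (B - A)*T - sc x*B - sc x*B"
    by (simp add: right_diff_distrib TA TB algebra_simps)
  have "PB*(B-A)*T - sc x * (PB*B) - sc x * (PB*B) = PB*((B - A)*T - sc x*B - sc x*B)"
    by (simp add: algebra_simps sc_move2[of PB])
  also have "... = PB*(T*(A-B))" by (simp only: h3)
  also have "... = - (C*(A-B))" by (simp add: mult.assoc[symmetric] h1)
  also have "... = - (sc x * (B * PB))" by (simp only: h2 mult.assoc)
  finally have "PB*(B-A)*T - sc x * (B*PB) - sc x * (B*PB) = - (sc x * (B * PB))"
    by (simp only: c1)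
  then have h4: "PB*(B-A)*T = sc x*(B*PB)" by (rule aux_gr)
  define G where "G = PB*(B-A)"
  have "G*(T*T) = sc x*(B*(PB*T))" using h4 by (simp only: G_def mult.assoc[symmetric])
  also have "... = - (sc x*(B*C))" by (simp add: h1)
  finally have "G*(sc x*T + 1) = - (sc x*(B*C))" by (simp only: TT)
  then have "sc x * (G*T) + G = - (sc x*(B*C))"
    by (simp only: distrib_left sc_move2[of G] mult_1_right)
  then have h5: "G = - (sc x*(B*C)) - sc x * (sc x * (B*PB))"
    by (simp add: h4[folded G_def] algebra_simps)
  have "G*(A-B) = - (sc x*(B*(C*(A-B)))) - sc x * (sc x * (B*(PB*(A-B))))"
    by (simp only: h5 left_diff_distrib minus_mult_left mult.assoc sc_move2[of B])
  also have "... = - (sc x*(B*(sc x * (B * PB)))) - sc x * (sc x * (B*(PB*(A-B))))"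
    by (simp only: h2 mult.assoc)
  also have "... = - (sc x * (sc x * (B*(PB*A))))"
    by (simp add: algebra_simps c1 sc_move2[of B])
  also have "... = - (sc (x*x) * (PB*(A*B)))"
    using AB c1 by (metis mult.assoc sc_mult2)
  finally have "PB*((B-A)*(A-B)) = - (sc (x*x) * (PB*(A*B)))" by (simp only: G_def mult.assoc)
  then show ?thesis
    by (simp add: PB_def[symmetric] algebra_simps sc_move2[of PB] sc_move[of PB])
qed


lemma sc_distr: "sc (a + b) * X = sc a * X + sc b * X"
  by (simp add: sc_add[symmetric] distrib_right)

lemma quad_expand: "(B - sc u)*(B - sc v) = B*B - sc(u+v)*B + sc(u*v)"
  by (simp add: algebra_simps sc_move[of B] sc_mult sc_distr)

lemma sc_two: "sc 2 * X = X + X"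
  by (metis one_add_one sc_distr sc_one mult_1_left)

lemma R_expand:
  assumes AB: "A*B = B*A"
  shows "(A - B)*(A - B) - sc (x*x) * (A*B) = A*A - sc (2 + x*x) * (A*B) + B*B"
proof -
  have "sc (2 + x*x) * (A*B) = A*B + A*B + sc (x*x) * (A*B)"
    by (simp add: sc_distr sc_two)
  then show ?thesis by (simp add: algebra_simps AB)
qed

lemma S_expand:
  "(A - sc a)*(A + sc a - sc s * B) = A*A - sc(a*a) - sc s * (A*B) + sc (a*s) * B"
  by (simp add: algebra_simps sc_move[of A] sc_move2[of A] sc_mult sc_mult2)


lemma RB_id:
  assumes AB: "A*B = B*A" and q: "q \<noteq> 0" and x: "x = inverse q - q"
  shows "(B - sc (a/q^2))*(B - sc(a*q^2)) =
    ((A - B)*(A - B) - sc (x*x) * (A*B)) - (A - sc a)*(A + sc a - sc (2 + x*x) * B)"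
proof -
  have s1: "a/q^2 + a*q^2 = a*(2 + x*x)" using q unfolding x
    by (simp add: field_simps power2_eq_square)
  have s2: "a/q^2*(a*q^2) = a*a" using q by (simp add: field_simps)
  show ?thesis
    unfolding quad_expand R_expand[OF AB] S_expand s1 s2 by (simp add: algebra_simps)
qed

lemma RB_prod:
  assumes AB: "A*B = B*A" and q: "q \<noteq> 0" and x: "x = inverse q - q"
  shows "\<exists>Y Z. P B (concat (map (\<lambda>a. [a/q^2, a*q^2]) ls)) =
      P A ls * Y + ((A - B)*(A - B) - sc (x*x) * (A*B)) * Z"
proof (induction ls)
  case Nil
  show ?case by (rule exI[of _ 1], rule exI[of _ 0]) simp
next
  case (Cons a ls)
  then obtain Y Z where YZ: "P B (concat (map (\<lambda>a. [a/q^2, a*q^2]) ls)) =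
      P A ls * Y + ((A - B)*(A - B) - sc (x*x) * (A*B)) * Z" by blast
  define R where "R = (A - B)*(A - B) - sc (x*x) * (A*B)"
  define S where "S = A + sc a - sc (2 + x*x) * B"
  define D where "D = A - sc a"
  define PA where "PA = P A ls"
  have Rp: "R \<in> pAB A B" unfolding R_def by (intro pAB.intros)
  have Sp: "S \<in> pAB A B" unfolding S_def by (intro pAB.intros)
  have Dp: "D \<in> pAB A B" unfolding D_def by (intro pAB.intros)
  have PAp: "PA \<in> pAB A B" unfolding PA_def by (rule P_pA)
  have c1: "S * PA = PA * S" by (rule pAB_comm[OF AB Sp PAp])
  have c2: "(D * S) * R = R * (D * S)" by (rule pAB_comm[OF AB pmul[OF Dp Sp] Rp])
  have c1': "S * (PA * Y) = PA * (S * Y)" by (metis c1 mult.assoc)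
  have c2': "D * (S * (R * Z)) = R * (D * (S * Z))" by (metis c2 mult.assoc)
  have "P B (concat (map (\<lambda>a. [a/q^2, a*q^2]) (a # ls))) =
      (B - sc (a/q^2))*(B - sc(a*q^2)) * P B (concat (map (\<lambda>a. [a/q^2, a*q^2]) ls))"
    by (simp add: P_append mult.assoc)
  also have "... = (R - D * S) * (PA * Y + R * Z)"
    unfolding RB_id[OF AB q x] YZ R_def S_def D_def PA_def ..
  also have "... = D * PA * (- (S * Y)) + R * (PA * Y + R * Z - D * (S * Z))"
    by (simp add: algebra_simps c1' c2')
  finally show ?case unfolding D_def PA_def R_def P_Cons by blast
qed

lemma annih_step:
  assumes AB: "A*B = B*A" and TAT: "T*A*T = B" and TT: "T*T = sc (inverse q - q)*T + 1"
    and q: "q \<noteq> 0" and PA0: "P A ps = 0"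
  shows "P B (ps @ concat (map (\<lambda>a. [a/q^2, a*q^2]) ps)) = 0"
proof -
  define x where "x = inverse q - q"
  have TT': "T*T = sc x*T + 1" using TT x_def by simp
  have h: "P B ps * ((A - B)*(A - B) - sc (x*x) * (A*B)) = 0" by (rule PB_R[OF AB TAT TT' PA0])
  obtain Y Z where YZ: "P B (concat (map (\<lambda>a. [a/q^2, a*q^2]) ps)) =
      P A ps * Y + ((A - B)*(A - B) - sc (x*x) * (A*B)) * Z"
    using RB_prod[OF AB q x_def] by blast
  define R where "R = (A - B)*(A - B) - sc (x*x) * (A*B)"
  have "P B ps * (0 * Y + R * Z) = (P B ps * R) * Z" by (simp add: mult.assoc)
  then show ?thesis unfolding P_append YZ PA0 R_def[symmetric] using h[folded R_def] by simp
qed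




lemma comm_prod_list:
  assumes "\<And>y. y \<in> set ys \<Longrightarrow> (x::'a::monoid_mult) * y = y * x"
  shows "x * prod_list ys = prod_list ys * x"
  using assms
proof (induction ys)
  case Nil then show ?case by simp
next
  case (Cons y ys)
  then have "x * prod_list ys = prod_list ys * x" by simp
  moreover have "x * y = y * x" using Cons by simp
  ultimately show ?case by (metis mult.assoc prod_list.Cons)
qed

lemma K_word_set: "set (K_word i) \<subseteq> {0..<max i 1}"
  by (auto simp: K_word_def)

lemma K_word_Suc: "1 \<le> i \<Longrightarrow> K_word (Suc i) = i # K_word i @ [i]"
  by (simp add: K_word_def)

locale heckeB =
  fixes T :: "nat \<Rightarrow> 'k::field lop" and d :: nat and Q q :: 'k
  assumes Q: "Q \<noteq> 0" and q: "q \<noteq> 0"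
    and quad0: "T 0 * T 0 = sc (inverse Q - Q) * T 0 + 1"
    and quad: "1 \<le> j \<Longrightarrow> j < d \<Longrightarrow> T j * T j = sc (inverse q - q) * T j + 1"
    and braid: "1 \<le> i \<Longrightarrow> i + 1 < d \<Longrightarrow> T i * T (i+1) * T i = T (i+1) * T i * T (i+1)"
    and typeB: "1 < d \<Longrightarrow> T 0 * T 1 * T 0 * T 1 = T 1 * T 0 * T 1 * T 0"
    and comm: "i < d \<Longrightarrow> j < d \<Longrightarrow> i + 1 < j \<Longrightarrow> T i * T j = T j * T i"
begin

definition K :: "nat \<Rightarrow> 'k lop" where "K i = prod_list (map T (K_word i))"

lemma K1: "K 1 = T 0" by (simp add: K_def K_word_def)
lemma KSuc: "1 \<le> i \<Longrightarrow> K (Suc i) = T i * K i * T i"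
  by (simp add: K_def K_word_Suc mult.assoc)

lemma L1: "1 \<le> i \<Longrightarrow> i + 1 \<le> j \<Longrightarrow> j < d \<Longrightarrow> T j * K i = K i * T j"
  unfolding K_def
proof (rule comm_prod_list)
  fix y assume "1 \<le> i" "i + 1 \<le> j" "j < d" "y \<in> set (map T (K_word i))"
  then obtain l where "l \<in> set (K_word i)" "y = T l" by auto
  with K_word_set[of i] \<open>1 \<le> i\<close> have "l < i" by auto
  then show "T j * y = y * T j" using comm[of l j] \<open>y = T l\<close> \<open>i + 1 \<le> j\<close> \<open>j < d\<close> by simp
qed

lemma L2: "1 \<le> i \<Longrightarrow> i + 1 < d \<Longrightarrow> T i * K (i+2) = K (i+2) * T i"
proof -
  assume i: "1 \<le> i" "i + 1 < d"
  have Ki: "T (i+1) * K i = K i * T (i+1)" using L1[of i "i+1"] i by simp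
  have br: "T i * T (i+1) * T i = T (i+1) * T i * T (i+1)" using braid i by simp
  have brX: "T i * (T (i+1) * (T i * X)) = T (i+1) * (T i * (T (i+1) * X))" for X
    by (simp only: mult.assoc[symmetric] br)
  have KiX: "T (i+1) * (K i * X) = K i * (T (i+1) * X)" for X by (simp only: mult.assoc[symmetric] Ki)
  have e: "K (i+2) = T (i+1) * (T i * (K i * (T i * T (i+1))))"
    using KSuc[of "i+1"] KSuc[of i] i by (simp add: mult.assoc)
  have "T i * K (i+2) = T (i+1) * (T i * (K i * (T (i+1) * (T i * T (i+1)))))"
    unfolding e by (simp only: brX KiX)
  also have "... = T (i+1) * (T i * (K i * (T i * (T (i+1) * T i))))"
    using br by (simp only: mult.assoc)
  also have "... = K (i+2) * T i" unfolding e by (simp only: mult.assoc)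
  finally show ?thesis .
qed

lemma L3: "1 \<le> j \<Longrightarrow> j + 2 \<le> i \<Longrightarrow> i \<le> d \<Longrightarrow> T j * K i = K i * T j"
proof (induction i)
  case 0 then show ?case by simp
next
  case (Suc i)
  show ?case
  proof (cases "j + 2 = Suc i")
    case True
    then have "i = j + 1" by simp
    then show ?thesis using L2[of j] Suc.prems by (simp add: numeral_2_eq_2)
  next
    case False
    then have h: "j + 2 \<le> i" using Suc.prems by simp
    have IH: "T j * K i = K i * T j" using Suc.IH h Suc.prems by simp
    have c: "T j * T i = T i * T j" using comm[of j i] h Suc.prems by simp
    have e: "K (Suc i) = T i * K i * T i" using KSuc[of i] h Suc.prems by simp
    have "T j * K (Suc i) = ((T j * T i) * K i) * T i" by (simp only: e mult.assoc)
    also have "... = T i * (T j * K i) * T i" by (simp only: c mult.assoc)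
    also have "... = T i * K i * (T j * T i)" by (simp only: IH mult.assoc)
    also have "... = K (Suc i) * T j" by (simp only: e c mult.assoc)
    finally show ?thesis .
  qed
qed

lemma L4: "1 \<le> i \<Longrightarrow> i + 1 \<le> d \<Longrightarrow> K i * K (i+1) = K (i+1) * K i"
proof (induction i rule: nat_induct_at_least)
  case base
  have e: "K (1+1) = T 1 * T 0 * T 1" using KSuc[of 1] K1 by simp
  have tb: "T 0 * T 1 * T 0 * T 1 = T 1 * T 0 * T 1 * T 0" using typeB base by simp
  show ?case unfolding e K1 using tb by (simp only: mult.assoc)
next
  case (Suc i)
  let ?a = "T i" and ?b = "T (i+1)"
  have IH: "K i * K (i+1) = K (i+1) * K i" using Suc by simp
  have c: "K i * ?b = ?b * K i" using L1[of i "i+1"] Suc by simp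
  have br: "?a * ?b * ?a = ?b * ?a * ?b" using braid[of i] Suc by simp
  have brX: "?a * (?b * (?a * X)) = ?b * (?a * (?b * X))" for X by (simp only: br mult.assoc[symmetric])
  have cX: "K i * (?b * X) = ?b * (K i * X)" for X by (simp only: c mult.assoc[symmetric])
  have e1: "K (i+1) = ?a * K i * ?a" using KSuc[of i] Suc by simp
  have e2: "K (Suc i + 1) = ?b * K (i+1) * ?b" using KSuc[of "i+1"] Suc by simp
  have "K (Suc i) * K (Suc i + 1) = ?a * (K i * (?a * (?b * (?a * (K i * (?a * ?b))))))"
    using e1 e2 by (simp add: mult.assoc)
  also have "... = ?a * (K i * (?b * (?a * (?b * (K i * (?a * ?b))))))" by (simp only: brX)
  also have "... = ?a * (?b * (K i * (?a * (K i * (?b * (?a * ?b))))))" by (simp only: cX)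
  also have "... = ?a * (?b * (K i * (?a * (K i * (?a * (?b * ?a))))))"
    using br by (simp only: mult.assoc)
  also have "... = ?a * ?b * (K i * K (i+1)) * ?b * ?a" using e1 by (simp add: mult.assoc)
  finally have l: "K (Suc i) * K (Suc i + 1) = ?a * ?b * (K i * K (i+1)) * ?b * ?a" .
  have "K (Suc i + 1) * K (Suc i) = ?b * (?a * (K i * (?a * (?b * (?a * (K i * ?a))))))"
    using e1 e2 by (simp add: mult.assoc)
  also have "... = ?b * (?a * (K i * (?b * (?a * (?b * (K i * ?a))))))" by (simp only: brX)
  also have "... = ?b * (?a * (?b * (K i * (?a * (K i * (?b * ?a))))))" by (simp only: cX)
  also have "... = ?a * (?b * (?a * (K i * (?a * (K i * (?b * ?a))))))" by (simp only: brX)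
  also have "... = ?a * ?b * (K (i+1) * K i) * ?b * ?a" using e1 by (simp add: mult.assoc)
  finally show ?case using l IH by simp
qed

lemma L5: "1 \<le> i \<Longrightarrow> i < j \<Longrightarrow> j \<le> d \<Longrightarrow> K i * K j = K j * K i"
proof (induction j)
  case 0 then show ?case by simp
next
  case (Suc j)
  show ?case
  proof (cases "j = i")
    case True then show ?thesis using L4[of i] Suc.prems by simp
  next
    case False
    then have ij: "i < j" using Suc.prems by simp
    have IH: "K i * K j = K j * K i" using Suc ij by simp
    have c: "T j * K i = K i * T j" using L1[of i j] Suc.prems ij by simp
    have e: "K (Suc j) = T j * K j * T j" using KSuc[of j] Suc.prems ij by simp
    have "K i * K (Suc j) = (K i * T j) * K j * T j" by (simp only: e mult.assoc)
    also have "... = T j * (K i * K j) * T j" by (simp only: c[symmetric] mult.assoc)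
    also have "... = T j * K j * (K i * T j)" by (simp only: IH mult.assoc)
    also have "... = K (Suc j) * K i" by (simp only: e c[symmetric] mult.assoc)
    finally show ?thesis .
  qed
qed

lemma Kcomm: "1 \<le> i \<Longrightarrow> 1 \<le> j \<Longrightarrow> i \<le> d \<Longrightarrow> j \<le> d \<Longrightarrow> K i * K j = K j * K i"
  using L5[of i j] L5[of j i] by (cases i j rule: linorder_cases) auto

end

definition Sset :: "'k::field \<Rightarrow> 'k \<Rightarrow> 'k set" where
  "Sset Q q = {z. \<exists>a b::int. z = Q powi a * q powi b \<or> z = - (Q powi a * q powi b)}"

lemma Sset_mult: "Q \<noteq> 0 \<Longrightarrow> q \<noteq> 0 \<Longrightarrow> x \<in> Sset Q q \<Longrightarrow> y \<in> Sset Q q \<Longrightarrow> x * y \<in> Sset Q q"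
proof -
  assume Q: "Q \<noteq> 0" and q: "q \<noteq> 0" and "x \<in> Sset Q q" "y \<in> Sset Q q"
  then obtain a b c e where x: "x = Q powi a * q powi b \<or> x = - (Q powi a * q powi b)"
    and y: "y = Q powi c * q powi e \<or> y = - (Q powi c * q powi e)" unfolding Sset_def by blast
  have m: "(Q powi a * q powi b) * (Q powi c * q powi e) = Q powi (a + c) * q powi (b + e)"
    using Q q by (simp add: power_int_add)
  have "x*y = Q powi (a+c) * q powi (b+e) \<or> x*y = - (Q powi (a+c) * q powi (b+e))"
    using x y m by auto
  then show ?thesis unfolding Sset_def by blast
qed

lemma Sset_one: "1 \<in> Sset Q q" unfolding Sset_def by (auto intro!: exI[of _ 0])

lemma Sset_q2: "Q \<noteq> 0 \<Longrightarrow> q \<noteq> 0 \<Longrightarrow> x \<in> Sset Q q \<Longrightarrow> x / q^2 \<in> Sset Q q \<and> x * q^2 \<in> Sset Q q"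
proof -
  assume Q: "Q \<noteq> 0" and q: "q \<noteq> 0" and x: "x \<in> Sset Q q"
  have "q^2 = Q powi 0 * q powi 2" by simp
  then have a: "q^2 \<in> Sset Q q" unfolding Sset_def by blast
  have "inverse (q^2) = Q powi 0 * q powi (-2)" by (simp add: power_int_minus)
  then have b: "inverse (q^2) \<in> Sset Q q" unfolding Sset_def by blast
  show ?thesis using Sset_mult[OF Q q x a] Sset_mult[OF Q q x b] by (simp add: divide_inverse)
qed

context heckeB begin

lemma L6: "1 \<le> i \<Longrightarrow> i \<le> d \<Longrightarrow> \<exists>ps. set ps \<subseteq> Sset Q q \<and> P (K i) ps = 0"
proof (induction i rule: nat_induct_at_least)
  case base
  have "P (T 0) [inverse Q, - Q] = T 0 * T 0 + sc (Q - inverse Q) * T 0 - sc 1"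
    by (simp add: algebra_simps sc_move[of "T 0"] sc_mult sc_distr sc_uminus[symmetric] sc_diff[symmetric]
       Q del: sc_diff sc_uminus)
  also have "... = 0" by (simp add: quad0 sc_one algebra_simps sc_distr sc_uminus[symmetric] sc_diff[symmetric] del: sc_diff sc_uminus)
  finally have "P (K 1) [inverse Q, - Q] = 0" by (simp only: K1)
  moreover have "set [inverse Q, - Q] \<subseteq> Sset Q q"
  proof -
    have "inverse Q = Q powi (-1) * q powi 0" by (simp add: power_int_minus)
    moreover have "- Q = - (Q powi 1 * q powi 0)" by simp
    ultimately show ?thesis unfolding Sset_def by (simp only: set_simps insert_subset mem_Collect_eq) blast
  qed
  ultimately show ?case by blast
next
  case (Suc i)
  then obtain ps where ps: "set ps \<subseteq> Sset Q q" "P (K i) ps = 0" by auto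
  have AB: "K i * K (Suc i) = K (Suc i) * K i" using L4[of i] Suc by simp
  have TAT: "T i * K i * T i = K (Suc i)" using KSuc[of i] Suc by simp
  have TT: "T i * T i = sc (inverse q - q) * T i + 1" using quad[of i] Suc by simp
  have "P (K (Suc i)) (ps @ concat (map (\<lambda>a. [a/q^2, a*q^2]) ps)) = 0"
    by (rule annih_step[OF AB TAT TT q ps(2)])
  moreover have "set (ps @ concat (map (\<lambda>a. [a/q^2, a*q^2]) ps)) \<subseteq> Sset Q q"
    using ps(1) Sset_q2[OF Q q] by auto
  ultimately show ?case by blast
qed


end

lemma Rep_P_Cons: "Rep_lop (P X (a # ps)) u = Rep_lop (P X ps) (Rep_lop X u - smul a u)"
  by (simp add: Rep_times Rep_minus Rep_sc)

lemma find_eig: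
  assumes "Rep_lop (P X ps) u = 0" and "F u" and "u \<noteq> 0"
    and cX: "\<And>v. F v \<Longrightarrow> F (Rep_lop X v)" and cs: "\<And>v c. F v \<Longrightarrow> F (smul c v)"
    and cd: "\<And>v w. F v \<Longrightarrow> F w \<Longrightarrow> F (v - w)"
  shows "\<exists>a\<in>set ps. \<exists>u'. F u' \<and> u' \<noteq> 0 \<and> Rep_lop X u' = smul a u'"
  using assms(1-3)
proof (induction ps arbitrary: u)
  case Nil then show ?case by (simp add: Rep_one)
next
  case (Cons a ps)
  show ?case
  proof (cases "Rep_lop X u - smul a u = 0")
    case True
    then show ?thesis using Cons.prems by auto
  next
    case False
    have F1: "F (Rep_lop X u - smul a u)" using cd[OF cX[OF Cons.prems(2)] cs[OF Cons.prems(2)]] .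
    have "Rep_lop (P X ps) (Rep_lop X u - smul a u) = 0" using Cons.prems(1) by (simp only: Rep_P_Cons)
    from Cons.IH[OF this F1 False] show ?thesis by (meson list.set_intros(2))
  qed
qed

lemma smul_lin_closed:
  fixes Y :: "'k::field lop"
  shows "Rep_lop Y (smul c v) = smul c (Rep_lop Y v)" "Rep_lop Y (v - w) = Rep_lop Y v - Rep_lop Y w"
  using islin_smul[OF Rep_islin] islin_diff[OF Rep_islin] by auto

lemma smul_diff: "smul c (v - w) = smul c v - smul c w" by (simp add: smul_def fun_eq_iff algebra_simps)
lemma smul_smul: "smul c (smul e v) = smul (c * e) v" by (simp add: smul_def fun_eq_iff)
lemma smul_comm: "smul c (smul e v) = smul e (smul c v)" by (simp add: smul_def fun_eq_iff)

lemma Sset_prod: "Q \<noteq> 0 \<Longrightarrow> q \<noteq> 0 \<Longrightarrow> (\<And>i. i \<in> A \<Longrightarrow> f i \<in> Sset Q q) \<Longrightarrow> prod f A \<in> Sset Q q"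
proof (induction A rule: infinite_finite_induct)
  case (infinite A) then show ?case by (simp add: Sset_one)
next
  case empty then show ?case by (simp add: Sset_one)
next
  case (insert x F) then show ?case by (simp add: Sset_mult)
qed

context heckeB begin

definition cc :: "'k lop" where "cc = prod_list (map K [1..<d+1])"

lemma cc_comm: "1 \<le> j \<Longrightarrow> j \<le> d \<Longrightarrow> K j * cc = cc * K j"
  unfolding cc_def by (rule comm_prod_list) (auto intro: Kcomm)

lemma Rep_comm: "X * Y = Y * X \<Longrightarrow> Rep_lop X (Rep_lop Y u) = Rep_lop Y (Rep_lop X u)"
  by (metis Rep_times)

lemma prod_eig:
  assumes "\<And>i. 1 \<le> i \<Longrightarrow> i \<le> m \<Longrightarrow> Rep_lop (K i) u = smul (lam i) u"
  shows "Rep_lop (prod_list (map K [1..<m+1])) u = smul (\<Prod>i\<in>{1..m}. lam i) u"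
  using assms
proof (induction m)
  case 0 then show ?case by (simp add: Rep_one smul_def)
next
  case (Suc m)
  have "Rep_lop (prod_list (map K [1..<Suc m+1])) u = Rep_lop (K (Suc m)) (smul (\<Prod>i\<in>{1..m}. lam i) u)"
    using Suc by (simp add: Rep_times)
  also have "... = smul (\<Prod>i\<in>{1..Suc m}. lam i) u"
    using Suc.prems[of "Suc m"] by (simp add: smul_lin_closed smul_smul mult.commute)
  finally show ?case .
qed

lemma main_eig:
  assumes ev: "Rep_lop cc v = smul e v" and v: "v \<noteq> 0" and m: "m \<le> d"
  shows "\<exists>u lam. u \<noteq> 0 \<and> Rep_lop cc u = smul e u \<and>
     (\<forall>i. 1 \<le> i \<longrightarrow> i \<le> m \<longrightarrow> lam i \<in> Sset Q q \<and> Rep_lop (K i) u = smul (lam i) u)"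
  using m
proof (induction m)
  case 0 show ?case using ev v by (intro exI[of _ v] exI[of _ "\<lambda>_. 1"]) (simp add: zero_fun_def)
next
  case (Suc m)
  have "m \<le> d" using Suc.prems by simp
  from Suc.IH[OF this] obtain u lam where u: "u \<noteq> 0" "Rep_lop cc u = smul e u"
    and lam: "\<forall>i. 1 \<le> i \<longrightarrow> i \<le> m \<longrightarrow> lam i \<in> Sset Q q \<and> Rep_lop (K i) u = smul (lam i) u" by blast
  define F where "F w \<longleftrightarrow> Rep_lop cc w = smul e w \<and> (\<forall>i. 1 \<le> i \<longrightarrow> i \<le> m \<longrightarrow> Rep_lop (K i) w = smul (lam i) w)" for w
  obtain ps where ps: "set ps \<subseteq> Sset Q q" "P (K (Suc m)) ps = 0" using L6[of "Suc m"] Suc.prems by auto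
  have Fu: "F u" using u lam unfolding F_def by auto
  have cX: "F (Rep_lop (K (Suc m)) w)" if Fw: "F w" for w
  proof -
    have c1: "Rep_lop cc (Rep_lop (K (Suc m)) w) = Rep_lop (K (Suc m)) (Rep_lop cc w)"
      using Rep_comm[OF cc_comm[of "Suc m"]] Suc.prems by simp
    have "Rep_lop cc (Rep_lop (K (Suc m)) w) = smul e (Rep_lop (K (Suc m)) w)"
      unfolding c1 using Fw unfolding F_def by (simp only: smul_lin_closed)
    moreover have "Rep_lop (K i) (Rep_lop (K (Suc m)) w) = smul (lam i) (Rep_lop (K (Suc m)) w)"
      if "1 \<le> i" "i \<le> m" for i
    proof -
      have c2: "Rep_lop (K i) (Rep_lop (K (Suc m)) w) = Rep_lop (K (Suc m)) (Rep_lop (K i) w)"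
        using Rep_comm[OF Kcomm[of "Suc m" i]] Suc.prems that by simp
      show ?thesis unfolding c2 using Fw that unfolding F_def by (simp only: smul_lin_closed)
    qed
    ultimately show ?thesis unfolding F_def by blast
  qed
  have cs: "F (smul c w)" if "F w" for w c
    using that unfolding F_def by (simp add: smul_lin_closed smul_smul mult.commute)
  have cd: "F (w1 - w2)" if "F w1" "F w2" for w1 w2
    using that unfolding F_def by (simp add: smul_lin_closed smul_diff)
  have "Rep_lop (P (K (Suc m)) ps) u = 0" using ps(2) Rep_lop_inverse
    by (metis Rep_lop_inject zero_lop.rep_eq)
  then obtain a u' where a: "a \<in> set ps" and u': "F u'" "u' \<noteq> 0" "Rep_lop (K (Suc m)) u' = smul a u'"
    using find_eig[of "K (Suc m)" ps u F, OF _ Fu u(1) cX cs cd] by blast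
  define lam' where "lam' = lam(Suc m := a)"
  have "\<forall>i. 1 \<le> i \<longrightarrow> i \<le> Suc m \<longrightarrow> lam' i \<in> Sset Q q \<and> Rep_lop (K i) u' = smul (lam' i) u'"
  proof (intro allI impI)
    fix i assume i: "1 \<le> i" "i \<le> Suc m"
    show "lam' i \<in> Sset Q q \<and> Rep_lop (K i) u' = smul (lam' i) u'"
    proof (cases "i = Suc m")
      case True then show ?thesis using u'(3) a ps(1) unfolding lam'_def by auto
    next
      case False then have "i \<le> m" using i by simp
      then show ?thesis using False u'(1) lam i unfolding lam'_def F_def by simp
    qed
  qed
  then show ?case using u' unfolding F_def by blast
qed

theorem eig_in_S:
  assumes ev: "Rep_lop cc v = smul e v" and v: "v \<noteq> 0"
  shows "e \<in> Sset Q q"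
proof -
  obtain u lam where u: "u \<noteq> 0" "Rep_lop cc u = smul e u"
    and lam: "\<forall>i. 1 \<le> i \<longrightarrow> i \<le> d \<longrightarrow> lam i \<in> Sset Q q \<and> Rep_lop (K i) u = smul (lam i) u"
    using main_eig[OF ev v order_refl] by blast
  have "Rep_lop cc u = smul (\<Prod>i\<in>{1..d}. lam i) u"
    unfolding cc_def by (rule prod_eig) (use lam in auto)
  then have eq: "smul e u = smul (\<Prod>i\<in>{1..d}. lam i) u" using u by simp
  obtain w where "u w \<noteq> 0" using u(1) by (auto simp: fun_eq_iff)
  then have "e = (\<Prod>i\<in>{1..d}. lam i)" using fun_cong[OF eq, of w] by (simp add: smul_def)
  moreover have "(\<Prod>i\<in>{1..d}. lam i) \<in> Sset Q q"
    using lam by (intro Sset_prod[OF Q q]) auto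
  ultimately show ?thesis by simp
qed

end




lemma finite_idx: "finite (idx_set n)"
proof -
  have "idx_set n \<subseteq> {- int n .. int n}" unfolding idx_set_def by auto
  then show ?thesis by (rule finite_subset) simp
qed

lemma idx_neg[simp]: "- a \<in> idx_set n \<longleftrightarrow> a \<in> idx_set n"
proof -
  have "(- a - (int n - 1)) mod 2 = 0 \<longleftrightarrow> (a - (int n - 1)) mod 2 = 0"
  proof -
    have "- a - (int n - 1) = - (a - (int n - 1)) - 2 * (int n - 1)" by simp
    then have "(- a - (int n - 1)) mod 2 = (- (a - (int n - 1))) mod 2" by (metis mod_diff_eq mod_mult_self1_is_0 diff_zero mod_mod_trivial)
    then show ?thesis by (simp add: zmod_zminus1_eq_if) (smt (verit) mod_eq_0_iff_dvd dvd_minus_iff)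
  qed
  then show ?thesis unfolding idx_set_def by simp
qed

lemma finite_words: "finite (words n d)"
proof -
  have "words n d = {w. set w \<subseteq> idx_set n \<and> length w = d}" unfolding words_def by auto
  then show ?thesis using finite_lists_length_eq[OF finite_idx] by simp
qed

lemma sum_fun_apply: "(sum g A) x = sum (\<lambda>a. g a x) A"
  by (induction A rule: infinite_finite_induct) auto

lemma delta_mult: "delta w wa * y = (if w = wa then y else 0)" by (simp add: delta_def)

lemma smul_zero[simp]: "smul c 0 = 0" by (simp add: smul_def fun_eq_iff)

lemma delta_apply: "delta w u = (if u = w then 1 else 0)" by (simp add: delta_def)

locale conc =
  fixes n d :: nat and Q q :: "'k::field"
  assumes Q: "Q \<noteq> 0" and q: "q \<noteq> 0" and d1: "1 \<le> d"
begin

abbreviation W where "W \<equiv> words n d"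

definition rs :: "(int list \<Rightarrow> 'k) \<Rightarrow> (int list \<Rightarrow> 'k)" where
  "rs v = (\<lambda>u. if u \<in> W then v u else 0)"

definition sj :: "nat \<Rightarrow> 'k" where "sj j = (if j = 0 then inverse Q else inverse q)"

definition Tt :: "nat \<Rightarrow> (int list \<Rightarrow> 'k) \<Rightarrow> (int list \<Rightarrow> 'k)" where
  "Tt j v = gen_act n d Q q j v + smul (sj j) (v - rs v)"

lemma gen_act_add: "gen_act n d Q q j (u + v) = gen_act n d Q q j u + gen_act n d Q q j v"
  by (simp add: gen_act_def fun_eq_iff algebra_simps sum.distrib)
lemma gen_act_smul: "gen_act n d Q q j (smul c u) = smul c (gen_act n d Q q j u)"
  by (simp add: gen_act_def fun_eq_iff smul_def sum_distrib_left algebra_simps)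

lemma rs_add: "rs (u + v) = rs u + rs v" by (simp add: rs_def fun_eq_iff)
lemma rs_smul: "rs (smul c u) = smul c (rs u)" by (simp add: rs_def fun_eq_iff smul_def)

lemma gen_act_smul': "gen_act n d Q q j (\<lambda>w. c * u w) x = c * gen_act n d Q q j u x"
  using gen_act_smul[of j c u] by (simp add: smul_def fun_eq_iff)
lemma rs_smul': "rs (\<lambda>w. c * u w) x = c * rs u x"
  by (simp add: rs_def)

lemma Tt_lin: "islin (Tt j)"
  unfolding islin_def Tt_def
  by (auto simp: gen_act_add rs_add fun_eq_iff smul_def algebra_simps gen_act_smul' rs_smul')

definition Top :: "nat \<Rightarrow> 'k lop" where "Top j = Abs_lop (Tt j)"

lemma Rep_Top: "Rep_lop (Top j) = Tt j"
  unfolding Top_def using Tt_lin by (simp add: Abs_lop_inverse)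

lemma Tt_add: "Tt j (u + v) = Tt j u + Tt j v" using islin_add[OF Tt_lin] .
lemma Tt_smul: "Tt j (smul c u) = smul c (Tt j u)" using islin_smul[OF Tt_lin] .

lemma Tt_out: "rs u = 0 \<Longrightarrow> Tt j u = smul (sj j) u"
proof -
  assume r: "rs u = 0"
  then have "\<forall>w\<in>W. u w = 0" by (metis rs_def zero_fun_apply)
  then have "gen_act n d Q q j u = 0" by (simp add: gen_act_def fun_eq_iff)
  then show ?thesis by (simp add: Tt_def r)
qed

lemma rs_delta: "w \<in> W \<Longrightarrow> rs (delta w) = delta w"
  by (auto simp: rs_def fun_eq_iff delta_apply)

lemma Tt_delta: "w \<in> W \<Longrightarrow> Tt j (delta w) = gen_basis Q q j w"
proof -
  assume w: "w \<in> W"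
  have "gen_act n d Q q j (delta w) = gen_basis Q q j w"
    unfolding gen_act_def fun_eq_iff delta_mult
    by (simp add: w finite_words)
  then show ?thesis by (simp add: Tt_def rs_delta w)
qed

lemma islin_sum: "islin f \<Longrightarrow> f (sum g A) = sum (\<lambda>a. f (g a)) A"
  by (induction A rule: infinite_finite_induct) (auto simp: islin_zero islin_add)

lemma rs_decomp: "rs u = (\<Sum>w\<in>W. smul (u w) (delta w))"
  by (auto simp: rs_def fun_eq_iff smul_def delta_apply sum_fun_apply finite_words delta_mult[unfolded delta_def] mult.commute[of _ "if _ then _ else _"])

lemma lop_eq_basis:
  assumes b: "\<And>w. w \<in> W \<Longrightarrow> Rep_lop X (delta w) = Rep_lop Y (delta w)"
    and o: "\<And>u. rs u = 0 \<Longrightarrow> Rep_lop X u = Rep_lop Y u"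
  shows "X = Y"
proof (rule lop_eqI)
  fix u
  have dec: "u = rs u + (u - rs u)" by simp
  have r0: "rs (u - rs u) = 0" by (simp add: rs_def fun_eq_iff)
  have s: "Rep_lop Z (rs u) = (\<Sum>w\<in>W. smul (u w) (Rep_lop Z (delta w)))" for Z :: "'k lop"
    unfolding rs_decomp by (simp add: islin_sum[OF Rep_islin] islin_smul[OF Rep_islin])
  have "Rep_lop X u = Rep_lop X (rs u) + Rep_lop X (u - rs u)"
    by (subst dec) (simp only: islin_add[OF Rep_islin])
  also have "... = Rep_lop Y (rs u) + Rep_lop Y (u - rs u)"
    unfolding s using b o[OF r0] by simp
  also have "... = Rep_lop Y u" by (subst (3) dec) (simp only: islin_add[OF Rep_islin])
  finally show "Rep_lop X u = Rep_lop Y u" .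
qed


lemma smul_delta_fun: "(\<lambda>u. c * delta w u) = smul c (delta w)" by (simp add: smul_def)
lemma plus_delta_fun: "(\<lambda>u. delta v u + c * delta w u) = delta v + smul c (delta w)"
  by (simp add: smul_def fun_eq_iff)

lemma GB_pos: "1 \<le> j \<Longrightarrow> length xs = j - 1 \<Longrightarrow> gen_basis Q q j (xs @ a # b # zs) =
  (if a = b then smul (inverse q) (delta (xs @ a # b # zs)) else if a < b then delta (xs @ b # a # zs)
   else delta (xs @ b # a # zs) + smul (inverse q - q) (delta (xs @ a # b # zs)))"
proof -
  assume j: "1 \<le> j" "length xs = j - 1"
  then have jj: "j = Suc (length xs)" by simp
  show ?thesis unfolding jj gen_basis_def swap_at_def Let_def smul_delta_fun plus_delta_fun
    by (simp add: nth_append list_update_append)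
qed

lemma GB_0: "gen_basis Q q 0 (a # zs) =
  (if a = 0 then smul (inverse Q) (delta (a # zs)) else if 0 < a then delta (- a # zs)
   else delta (- a # zs) + smul (inverse Q - Q) (delta (a # zs)))"
  unfolding gen_basis_def Let_def smul_delta_fun plus_delta_fun by simp

lemma GB_1: "gen_basis Q q (Suc 0) (a # b # zs) =
  (if a = b then smul (inverse q) (delta (a # b # zs)) else if a < b then delta (b # a # zs)
   else delta (b # a # zs) + smul (inverse q - q) (delta (a # b # zs)))"
  using GB_pos[of 1 "[]" a b zs] by simp

lemma GB_pos2: "1 \<le> j \<Longrightarrow> length xs = j - 1 \<Longrightarrow> gen_basis Q q (Suc j) (xs @ a # b # c # zs) =
  (if b = c then smul (inverse q) (delta (xs @ a # b # c # zs)) else if b < c then delta (xs @ a # c # b # zs)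
   else delta (xs @ a # c # b # zs) + smul (inverse q - q) (delta (xs @ a # b # c # zs)))"
  using GB_pos[of "Suc j" "xs @ [a]" b c zs] by simp

lemma GB_far: "length xs + length ys + 3 = j \<Longrightarrow> gen_basis Q q j (xs @ a # b # ys @ c # e # zs) =
  (if c = e then smul (inverse q) (delta (xs @ a # b # ys @ c # e # zs)) else if c < e then delta (xs @ a # b # ys @ e # c # zs)
   else delta (xs @ a # b # ys @ e # c # zs) + smul (inverse q - q) (delta (xs @ a # b # ys @ c # e # zs)))"
  using GB_pos[of j "xs @ a # b # ys" c e zs] by simp

lemma GB_far0: "length ys + 2 = j \<Longrightarrow> gen_basis Q q j (a # ys @ c # e # zs) =
  (if c = e then smul (inverse q) (delta (a # ys @ c # e # zs)) else if c < e then delta (a # ys @ e # c # zs)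
   else delta (a # ys @ e # c # zs) + smul (inverse q - q) (delta (a # ys @ c # e # zs)))"
  using GB_pos[of j "a # ys" c e zs] by simp

lemmas Tt_simps = Tt_add Tt_smul Tt_delta GB_pos GB_0 GB_1 GB_pos2 GB_far GB_far0

lemma braid_w:
  assumes i: "1 \<le> i" "length xs = i - 1" and w: "xs @ a # b # c # ys \<in> W"
  shows "Tt i (Tt (Suc i) (Tt i (delta (xs @ a # b # c # ys)))) =
         Tt (Suc i) (Tt i (Tt (Suc i) (delta (xs @ a # b # c # ys))))"
proof -
  have m: "a \<in> idx_set n" "b \<in> idx_set n" "c \<in> idx_set n" "set xs \<subseteq> idx_set n" "set ys \<subseteq> idx_set n"
    "length xs + length ys + 3 = d" using w by (auto simp: words_def)
  show ?thesis using i m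
    by (cases a b rule: linorder_cases; cases b c rule: linorder_cases; cases a c rule: linorder_cases;
        simp add: Tt_simps words_def; simp add: fun_eq_iff smul_def delta_apply field_simps q)
qed

lemma GB_1': "gen_basis Q q 1 (a # b # zs) =
  (if a = b then smul (inverse q) (delta (a # b # zs)) else if a < b then delta (b # a # zs)
   else delta (b # a # zs) + smul (inverse q - q) (delta (a # b # zs)))"
  using GB_1 by simp

lemma quad_w:
  assumes i: "1 \<le> j" "length xs = j - 1" and w: "xs @ a # b # zs \<in> W"
  shows "Tt j (Tt j (delta (xs @ a # b # zs))) = smul (inverse q - q) (Tt j (delta (xs @ a # b # zs))) + delta (xs @ a # b # zs)"
proof -
  have m: "a \<in> idx_set n" "b \<in> idx_set n" "set xs \<subseteq> idx_set n" "set zs \<subseteq> idx_set n"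
    "length xs + length zs + 2 = d" using w by (auto simp: words_def)
  show ?thesis using i m
    by (cases a b rule: linorder_cases;
        simp add: Tt_simps words_def; simp add: fun_eq_iff smul_def delta_apply field_simps q)
qed

lemma quad0_w:
  assumes w: "a # zs \<in> W"
  shows "Tt 0 (Tt 0 (delta (a # zs))) = smul (inverse Q - Q) (Tt 0 (delta (a # zs))) + delta (a # zs)"
proof -
  have m: "a \<in> idx_set n" "set zs \<subseteq> idx_set n" "length zs + 1 = d" using w by (auto simp: words_def)
  show ?thesis using m
    by (cases a "0::int" rule: linorder_cases;
        simp add: Tt_simps words_def; simp add: fun_eq_iff smul_def delta_apply field_simps Q)
qed

lemma comm_w:
  assumes i: "1 \<le> i" "length xs = i - 1" "length xs + length ys + 3 = j" and w: "xs @ a # b # ys @ c # e # zs \<in> W"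
  shows "Tt j (Tt i (delta (xs @ a # b # ys @ c # e # zs))) = Tt i (Tt j (delta (xs @ a # b # ys @ c # e # zs)))"
proof -
  have m: "a \<in> idx_set n" "b \<in> idx_set n" "c \<in> idx_set n" "e \<in> idx_set n" "set xs \<subseteq> idx_set n"
    "set ys \<subseteq> idx_set n" "set zs \<subseteq> idx_set n"
    "length xs + length ys + length zs + 4 = d" using w by (auto simp: words_def)
  show ?thesis using i m
    by (cases a b rule: linorder_cases; cases c e rule: linorder_cases;
        simp add: Tt_simps words_def; simp add: fun_eq_iff smul_def delta_apply field_simps q)
qed

lemma comm0_w:
  assumes i: "length ys + 2 = j" and w: "a # ys @ c # e # zs \<in> W"
  shows "Tt j (Tt 0 (delta (a # ys @ c # e # zs))) = Tt 0 (Tt j (delta (a # ys @ c # e # zs)))"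
proof -
  have m: "a \<in> idx_set n" "c \<in> idx_set n" "e \<in> idx_set n"
    "set ys \<subseteq> idx_set n" "set zs \<subseteq> idx_set n"
    "length ys + length zs + 3 = d" using w by (auto simp: words_def)
  show ?thesis using i m
    by (cases a "0::int" rule: linorder_cases; cases c e rule: linorder_cases;
        simp add: Tt_simps words_def; simp add: fun_eq_iff smul_def delta_apply field_simps q Q)
qed

lemma typeB_w:
  assumes w: "a # b # zs \<in> W"
  shows "Tt 1 (Tt 0 (Tt 1 (Tt 0 (delta (a # b # zs))))) = Tt 0 (Tt 1 (Tt 0 (Tt 1 (delta (a # b # zs)))))"
proof -
  have m: "a \<in> idx_set n" "b \<in> idx_set n" "set zs \<subseteq> idx_set n" "length zs + 2 = d"
    using w by (auto simp: words_def)
  show ?thesis using m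
    by (cases a "0::int" rule: linorder_cases; cases b "0::int" rule: linorder_cases; cases a b rule: linorder_cases;
        cases a "-b" rule: linorder_cases;
        simp add: Tt_simps GB_1' words_def; simp add: fun_eq_iff smul_def delta_apply field_simps q Q)
qed

lemma split_at: "k < length w \<Longrightarrow> \<exists>xs a ys. w = xs @ a # ys \<and> length xs = k"
  by (metis id_take_nth_drop length_take min.absorb4)

lemma split2: "k + 2 \<le> length w \<Longrightarrow> \<exists>xs a b ys. w = xs @ a # b # ys \<and> length xs = k"
proof -
  assume h: "k + 2 \<le> length w"
  then obtain xs a ys where w: "w = xs @ a # ys" "length xs = k" using split_at[of k w] by auto
  then have "0 < length ys" using h by fastforce
  then obtain b ys' where "ys = b # ys'" by (metis length_greater_0_conv neq_Nil_conv)
  then show ?thesis using w by blast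
qed

lemma split3: "k + 3 \<le> length w \<Longrightarrow> \<exists>xs a b c ys. w = xs @ a # b # c # ys \<and> length xs = k"
proof -
  assume h: "k + 3 \<le> length w"
  then obtain xs a b ys where w: "w = xs @ a # b # ys" "length xs = k" using split2[of k w] by auto
  then have "0 < length ys" using h by fastforce
  then obtain c ys' where "ys = c # ys'" by (metis length_greater_0_conv neq_Nil_conv)
  then show ?thesis using w by blast
qed

lemma split_far: "k + 2 \<le> l \<Longrightarrow> l + 2 \<le> length w \<Longrightarrow>
   \<exists>xs a b ys c e zs. w = xs @ a # b # ys @ c # e # zs \<and> length xs = k \<and> length xs + length ys + 2 = l"
proof -
  assume h: "k + 2 \<le> l" "l + 2 \<le> length w"
  then obtain xs a b r where w: "w = xs @ a # b # r" "length xs = k" using split2[of k w] by auto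
  have "(l - k - 2) + 2 \<le> length r" using h w by simp
  then obtain ys c e zs where r: "r = ys @ c # e # zs" "length ys = l - k - 2" using split2[of "l - k - 2" r] by auto
  show ?thesis using w r h by (intro exI[of _ xs] exI[of _ a] exI[of _ b] exI[of _ ys] exI[of _ c] exI[of _ e] exI[of _ zs]) auto
qed

lemma rs_Tt_out: "rs u = 0 \<Longrightarrow> rs (smul c u) = 0" by (simp add: rs_smul)

lemma Rep_simps: "Rep_lop (X * Y) u = Rep_lop Y (Rep_lop X u)" "Rep_lop (X + Y) u = Rep_lop X u + Rep_lop Y u"
  "Rep_lop (sc c) u = smul c u" "Rep_lop 1 u = u" "Rep_lop (Top j) = Tt j"
  by (simp_all add: Rep_times Rep_plus Rep_sc Rep_one Rep_Top)

lemma Tt_out': "rs u = 0 \<Longrightarrow> Tt j (smul c u) = smul (sj j) (smul c u)"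
  using Tt_out[of "smul c u" j] by (simp add: rs_smul)

lemma hecke: "heckeB Top d Q q"
proof (unfold_locales)
  show "Q \<noteq> 0" by (rule Q)
  show "q \<noteq> 0" by (rule q)
next
  show "Top 0 * Top 0 = sc (inverse Q - Q) * Top 0 + 1"
  proof (rule lop_eq_basis)
    fix w assume w: "w \<in> W"
    show "Rep_lop (Top 0 * Top 0) (delta w) = Rep_lop (sc (inverse Q - Q) * Top 0 + 1) (delta w)"
    proof (cases w)
      case Nil then show ?thesis using w d1 by (simp add: words_def)
    next
      case (Cons a zs)
      then show ?thesis using quad0_w[of a zs] w by (simp add: Rep_simps Tt_smul)
    qed
  next
    fix u :: "int list \<Rightarrow> 'k" assume u: "rs u = 0"
    show "Rep_lop (Top 0 * Top 0) u = Rep_lop (sc (inverse Q - Q) * Top 0 + 1) u"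
      using u Q by (simp add: Rep_simps Tt_out Tt_out' Tt_smul Tt_add rs_smul rs_add; simp add: sj_def smul_def fun_eq_iff field_simps Q q)
  qed
next
  fix j assume j: "1 \<le> j" "j < d"
  show "Top j * Top j = sc (inverse q - q) * Top j + 1"
  proof (rule lop_eq_basis)
    fix w assume w: "w \<in> W"
    then have "(j - 1) + 2 \<le> length w" using j by (simp add: words_def)
    then obtain xs a b zs where s: "w = xs @ a # b # zs" "length xs = j - 1" using split2 by blast
    show "Rep_lop (Top j * Top j) (delta w) = Rep_lop (sc (inverse q - q) * Top j + 1) (delta w)"
      using quad_w[of j xs a b zs] s w j by (simp add: Rep_simps Tt_smul)
  next
    fix u :: "int list \<Rightarrow> 'k" assume u: "rs u = 0"
    show "Rep_lop (Top j * Top j) u = Rep_lop (sc (inverse q - q) * Top j + 1) u"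
      using u q j by (simp add: Rep_simps Tt_out Tt_out' Tt_smul Tt_add rs_smul rs_add; simp add: sj_def smul_def fun_eq_iff field_simps Q q)
  qed
next
  fix i assume i: "1 \<le> i" "i + 1 < d"
  show "Top i * Top (i+1) * Top i = Top (i+1) * Top i * Top (i+1)"
  proof (rule lop_eq_basis)
    fix w assume w: "w \<in> W"
    then have "(i - 1) + 3 \<le> length w" using i by (simp add: words_def)
    then obtain xs a b c ys where s: "w = xs @ a # b # c # ys" "length xs = i - 1" using split3 by blast
    show "Rep_lop (Top i * Top (i+1) * Top i) (delta w) = Rep_lop (Top (i+1) * Top i * Top (i+1)) (delta w)"
      using braid_w[of i xs a b c ys] s w i by (simp add: Rep_simps)
  next
    fix u :: "int list \<Rightarrow> 'k" assume u: "rs u = 0"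
    show "Rep_lop (Top i * Top (i+1) * Top i) u = Rep_lop (Top (i+1) * Top i * Top (i+1)) u"
      using u i by (simp add: Rep_simps Tt_out Tt_out' Tt_smul Tt_add rs_smul rs_add; simp add: sj_def smul_def fun_eq_iff field_simps Q q)
  qed
next
  assume d: "1 < d"
  show "Top 0 * Top 1 * Top 0 * Top 1 = Top 1 * Top 0 * Top 1 * Top 0"
  proof (rule lop_eq_basis)
    fix w assume w: "w \<in> W"
    then have "0 + 2 \<le> length w" using d by (simp add: words_def)
    then obtain xs a b zs where s: "w = xs @ a # b # zs" "length xs = 0" using split2 by blast
    show "Rep_lop (Top 0 * Top 1 * Top 0 * Top 1) (delta w) = Rep_lop (Top 1 * Top 0 * Top 1 * Top 0) (delta w)"
      using typeB_w[of a b zs] s w by (simp add: Rep_simps)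
  next
    fix u :: "int list \<Rightarrow> 'k" assume u: "rs u = 0"
    show "Rep_lop (Top 0 * Top 1 * Top 0 * Top 1) u = Rep_lop (Top 1 * Top 0 * Top 1 * Top 0) u"
      using u by (simp add: Rep_simps Tt_out Tt_out' Tt_smul Tt_add rs_smul rs_add; simp add: sj_def smul_def fun_eq_iff field_simps Q q)
  qed
next
  fix i j assume ij: "i < d" "j < d" "i + 1 < j"
  show "Top i * Top j = Top j * Top i"
  proof (rule lop_eq_basis)
    fix w assume w: "w \<in> W"
    show "Rep_lop (Top i * Top j) (delta w) = Rep_lop (Top j * Top i) (delta w)"
    proof (cases "i = 0")
      case True
      obtain a r where ar: "w = a # r" using w ij by (cases w) (auto simp: words_def)
      have "(j - 2) + 2 \<le> length r" using ij w ar by (auto simp: words_def)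
      then obtain ys c e zs where s: "r = ys @ c # e # zs" "length ys = j - 2" using split2 by blast
      have s': "w = a # ys @ c # e # zs" "length ys + 2 = j" using ar s ij True by auto
      show ?thesis using comm0_w[of ys j a c e zs] s' w True by (simp add: Rep_simps)
    next
      case False
      have "i - 1 + 2 \<le> j - 1" "j - 1 + 2 \<le> length w" using ij w False by (auto simp: words_def)
      then obtain xs a b ys c e zs where s: "w = xs @ a # b # ys @ c # e # zs" "length xs = i - 1"
        "length xs + length ys + 2 = j - 1" using split_far by blast
      show ?thesis using comm_w[of i xs ys j a b c e zs] s w False ij by (simp add: Rep_simps)
    qed
  next
    fix u :: "int list \<Rightarrow> 'k" assume u: "rs u = 0"
    show "Rep_lop (Top i * Top j) u = Rep_lop (Top j * Top i) u"
      using u by (simp add: Rep_simps Tt_out Tt_out' Tt_smul Tt_add rs_smul rs_add; simp add: sj_def smul_def fun_eq_iff field_simps Q q)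
  qed
qed

lemma ts_rs: "v \<in> tensor_space n d \<Longrightarrow> rs v = v"
  by (auto simp: tensor_space_def rs_def fun_eq_iff)

lemma gen_basis_supp:
  assumes w: "w \<in> W" and j: "j < d" and u: "u \<notin> W"
  shows "gen_basis Q q j w u = 0"
proof (cases "j = 0")
  case True
  obtain a zs where s: "w = a # zs" using w d1 by (cases w) (auto simp: words_def)
  have m: "a \<in> idx_set n" "set zs \<subseteq> idx_set n" "length zs + 1 = d" using w s by (auto simp: words_def)
  have "- a # zs \<in> W" "a # zs \<in> W" using m by (simp_all add: words_def)
  then have "u \<noteq> - a # zs" "u \<noteq> a # zs" using u by auto
  then show ?thesis using True s by (simp add: GB_0 smul_def delta_apply) blast
next
  case False
  have "(j - 1) + 2 \<le> length w" using w j False by (simp add: words_def)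
  then obtain xs a b zs where s: "w = xs @ a # b # zs" "length xs = j - 1" using split2 by blast
  have m: "a \<in> idx_set n" "b \<in> idx_set n" "set xs \<subseteq> idx_set n" "set zs \<subseteq> idx_set n"
    "length xs + length zs + 2 = d" using w s by (auto simp: words_def)
  have "xs @ b # a # zs \<in> W" "xs @ a # b # zs \<in> W" using m by (simp_all add: words_def)
  then have "u \<noteq> xs @ b # a # zs" "u \<noteq> xs @ a # b # zs" using u by auto
  then show ?thesis using False s by (simp add: GB_pos smul_def delta_apply) blast
qed

lemma gen_act_ts: "j < d \<Longrightarrow> gen_act n d Q q j v \<in> tensor_space n d"
  unfolding tensor_space_def gen_act_def
proof (intro CollectI allI impI)
  fix u assume "j < d" "u \<notin> W"
  then show "(\<Sum>w\<in>W. v w * gen_basis Q q j w u) = 0"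
    by (intro sum.neutral ballI) (simp add: gen_basis_supp)
qed

lemma Tt_ts: "v \<in> tensor_space n d \<Longrightarrow> Tt j v = gen_act n d Q q j v"
  by (simp add: Tt_def ts_rs)

lemma Rep_prod_fold:
  "v \<in> tensor_space n d \<Longrightarrow> (\<forall>j\<in>set js. j < d) \<Longrightarrow>
   Rep_lop (prod_list (map Top js)) v = fold (gen_act n d Q q) js v"
proof (induction js arbitrary: v)
  case Nil then show ?case by (simp add: Rep_one)
next
  case (Cons j js)
  have "Rep_lop (prod_list (map Top (j # js))) v = Rep_lop (prod_list (map Top js)) (Tt j v)"
    by (simp add: Rep_simps)
  also have "... = Rep_lop (prod_list (map Top js)) (gen_act n d Q q j v)" using Cons.prems by (simp add: Tt_ts)
  also have "... = fold (gen_act n d Q q) js (gen_act n d Q q j v)"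
    using Cons.IH[of "gen_act n d Q q j v"] Cons.prems gen_act_ts by simp
  finally show ?case by simp
qed

lemma prod_list_concat: "prod_list (concat xss) = prod_list (map prod_list xss)"
  by (induction xss) auto

lemma cK_set: "j \<in> set (cK_word d) \<Longrightarrow> j < d"
proof -
  assume "j \<in> set (cK_word d)"
  then obtain i where i: "i \<in> set [1..<d+1]" "j \<in> set (K_word i)" unfolding cK_word_def by auto
  then have "j \<in> {0..<max i 1}" using K_word_set[of i] by blast
  then have "j < max i 1" by simp
  moreover have "1 \<le> i" "i \<le> d" using i(1) by auto
  ultimately show "j < d" by simp
qed

end

theorem corollary2p6:
  fixes Q q ev :: "'k::field" and v :: "int list \<Rightarrow> 'k" and n d :: nat
  assumes "Q \<noteq> 0" and "q \<noteq> 0" and "n \<ge> 1" and "d \<ge> 1"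
    and "v \<in> tensor_space n d" and "\<exists>w. v w \<noteq> 0"
    and "cK_act n d Q q v = (\<lambda>u. ev * v u)"
  shows "\<exists>a b :: int. ev = Q powi a * q powi b \<or> ev = - (Q powi a * q powi b)"
proof -
  interpret C: conc n d Q q using assms by unfold_locales auto
  interpret H: heckeB C.Top d Q q by (rule C.hecke)
  have e: "H.cc = prod_list (map C.Top (cK_word d))"
    unfolding H.cc_def H.K_def cK_word_def by (simp add: C.prod_list_concat map_concat comp_def)
  have "Rep_lop H.cc v = cK_act n d Q q v"
    unfolding e cK_act_def word_act_def using C.Rep_prod_fold[OF assms(5)] C.cK_set by blast
  then have "Rep_lop H.cc v = smul ev v" using assms(7) by (simp add: smul_def)
  moreover have "v \<noteq> 0" using assms(6) by auto
  ultimately have "ev \<in> Sset Q q" by (rule H.eig_in_S)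
  then show ?thesis unfolding Sset_def by blast
qed

end
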